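(* Let $\delta\in(0,1)$ and let $X_1,X_2,\dots$ be independent random variables with $0\le X_i\le 1$ almost surely. Let $S_n=\sum_{i=1}^n\{X_i-\mathbb{E}(X_i)\}$, $v_n=\sum_{i=1}^n\mathrm{Var}(X_i)$, $b=1$, $u_n=2\ln(\log_2(n)+1)+\ln(4/\delta)$, and $$\epsilon_n=\frac{b u_n+\sqrt{b^2u_n^2+18v_{2n}u_n}}{3n}.$$ Then $$\mathbb{P}\big(\exists n\ge 1:\ S_n/n\ge\epsilon_n\big)\le\delta/2.$$
   Context: $\log_2$ denotes the base-2 logarithm and $\ln$ the natural logarithm. *)

theory Defs
  imports "HOL-Probability.Probability"
begin

definition S_sum :: "'a measure \<Rightarrow> (nat \<Rightarrow> 'a \<Rightarrow> real) \<Rightarrow> nat \<Rightarrow> 'a \<Rightarrow> real" where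
  "S_sum M X n \<omega> = (\<Sum>i=1..n. X i \<omega> - prob_space.expectation M (X i))"

definition v_sum :: "'a measure \<Rightarrow> (nat \<Rightarrow> 'a \<Rightarrow> real) \<Rightarrow> nat \<Rightarrow> real" where
  "v_sum M X n = (\<Sum>i=1..n. prob_space.variance M (X i))"

definition u_seq :: "real \<Rightarrow> nat \<Rightarrow> real" where
  "u_seq \<delta> n = 2 * ln (log 2 (real n) + 1) + ln (4 / \<delta>)"

definition eps_seq :: "'a measure \<Rightarrow> (nat \<Rightarrow> 'a \<Rightarrow> real) \<Rightarrow> real \<Rightarrow> nat \<Rightarrow> real" where
  "eps_seq M X \<delta> n =
     (let b = (1::real); u = u_seq \<delta> n
      in (b * u + sqrt (b\<^sup>2 * u\<^sup>2 + 18 * v_sum M X (2 * n) * u)) / (3 * real n))"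

end

theory Submission
  imports Defs
begin

lemma fact_ge_3pow: "2 * 3 ^ n \<le> (fact (n + 2) :: real)"
proof (induction n)
  case 0 then show ?case by simp
next
  case (Suc n)
  have "(2::real) * 3 ^ Suc n = 3 * (2 * 3^n)" by simp
  also have "\<dots> \<le> 3 * fact (n+2)" using Suc by linarith
  also have "\<dots> \<le> (real (n+2) + 1) * fact (n + 2)"
    by (intro mult_right_mono) auto
  also have "\<dots> = fact (Suc (n + 2))" by (simp only: fact_Suc of_nat_Suc add.commute)
  finally show ?case by simp
qed

lemma exp_bernstein_bound:
  fixes y l :: real
  assumes y: "\<bar>y\<bar> \<le> 1" and l: "0 \<le> l" "l < 3"
  shows "exp (l * y) \<le> 1 + l * y + y\<^sup>2 * (l\<^sup>2 / (2 * (1 - l / 3)))"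
proof -
  define x where "x = l * y"
  have e: "exp x = (\<Sum>n<2. inverse(fact n) *\<^sub>R (x ^ n)) + (\<Sum>n. inverse(fact (n + 2)) *\<^sub>R (x ^ (n + 2)))"
    by (rule exp_first_terms)
  have s1: "summable (\<lambda>n. inverse(fact (n + 2)) *\<^sub>R (x ^ (n + 2)))"
    using summable_ignore_initial_segment[OF summable_exp_generic[of x], of 2] by simp
  have geo: "(\<lambda>n. (l/3)^n) sums (1 / (1 - l/3))"
    using geometric_sums[of "l/3"] l by simp
  have s2: "(\<lambda>n. y\<^sup>2 * (l\<^sup>2/2) * (l/3)^n) sums (y\<^sup>2 * (l\<^sup>2/2) * (1 / (1 - l/3)))"
    by (intro sums_mult geo)
  have le: "inverse(fact (n + 2)) *\<^sub>R (x ^ (n + 2)) \<le> y\<^sup>2 * (l\<^sup>2/2) * (l/3)^n" for n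
  proof -
    have "y ^ (n+2) \<le> \<bar>y\<bar> ^ (n+2)" by (metis power_abs abs_ge_self)
    also have "\<dots> = \<bar>y\<bar>\<^sup>2 * \<bar>y\<bar>^n" by (metis power_add mult.commute)
    also have "\<dots> = y\<^sup>2 * \<bar>y\<bar>^n" by simp
    also have "\<dots> \<le> y\<^sup>2" using y by (simp add: mult_left_le power_le_one)
    finally have yy: "y ^ (n+2) \<le> y\<^sup>2" .
    have "x ^ (n+2) = l^(n+2) * y^(n+2)" by (simp add: x_def power_mult_distrib)
    also have "\<dots> \<le> l^(n+2) * y\<^sup>2" using yy l by (intro mult_left_mono) auto
    finally have xx: "x ^ (n+2) \<le> l^(n+2) * y\<^sup>2" .
    have "inverse(fact (n + 2)) *\<^sub>R (x ^ (n + 2)) = x^(n+2) / fact (n+2)"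
      by (simp add: divide_inverse mult.commute)
    also have "\<dots> \<le> (l^(n+2) * y\<^sup>2) / fact (n+2)"
      by (intro divide_right_mono xx) auto
    also have "\<dots> \<le> (l^(n+2) * y\<^sup>2) / (2 * 3^n)"
      using fact_ge_3pow[of n] l by (intro divide_left_mono) auto
    also have "\<dots> = y\<^sup>2 * (l\<^sup>2/2) * (l/3)^n"
      by (simp add: power_add power_divide field_simps power2_eq_square)
    finally show ?thesis .
  qed
  have "(\<Sum>n. inverse(fact (n + 2)) *\<^sub>R (x ^ (n + 2))) \<le> (\<Sum>n. y\<^sup>2 * (l\<^sup>2/2) * (l/3)^n)"
    using le s1 s2 by (intro suminf_le) (auto simp: sums_iff)
  also have "\<dots> = y\<^sup>2 * (l\<^sup>2 / (2 * (1 - l / 3)))"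
    using s2 by (simp add: sums_iff)
  finally have "(\<Sum>n. inverse(fact (n + 2)) *\<^sub>R (x ^ (n + 2))) \<le> y\<^sup>2 * (l\<^sup>2 / (2 * (1 - l / 3)))" .
  moreover have "(\<Sum>n<2. inverse(fact n) *\<^sub>R (x ^ n)) = 1 + x"
    by (simp add: eval_nat_numeral)
  ultimately show ?thesis using e by (simp add: x_def)
qed

definition gB :: "real \<Rightarrow> real" where "gB l = l\<^sup>2 / (2 * (1 - l / 3))"

lemma (in prob_space) mgf_bound:
  assumes [measurable]: "Z \<in> borel_measurable M"
    and bnd: "\<And>\<omega>. \<omega> \<in> space M \<Longrightarrow> \<bar>Z \<omega>\<bar> \<le> 1"
    and mean: "expectation Z = 0" and l: "0 \<le> l" "l < 3"
  shows "(\<integral>\<^sup>+\<omega>. ennreal (exp (l * Z \<omega>)) \<partial>M) \<le> ennreal (exp (expectation (\<lambda>\<omega>. (Z \<omega>)\<^sup>2) * gB l))"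
proof -
  have iZ: "integrable M Z"
    by (rule integrable_const_bound[where B=1]) (auto simp: bnd)
  have iZ2: "integrable M (\<lambda>\<omega>. (Z \<omega>)\<^sup>2)"
    by (rule integrable_const_bound[where B=1]) (auto simp: bnd abs_square_le_1)
  have iE: "integrable M (\<lambda>\<omega>. exp (l * Z \<omega>))"
  proof (rule integrable_const_bound[where B="exp l"])
    show "AE x in M. norm (exp (l * Z x)) \<le> exp l"
    proof (intro AE_I2)
      fix x assume x: "x \<in> space M"
      have "l * Z x \<le> l * 1" using bnd[OF x] l by (intro mult_left_mono) auto
      then show "norm (exp (l * Z x)) \<le> exp l" by simp
    qed
  qed simp
  have "(\<integral>\<^sup>+\<omega>. ennreal (exp (l * Z \<omega>)) \<partial>M) = ennreal (expectation (\<lambda>\<omega>. exp (l * Z \<omega>)))"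
    by (intro nn_integral_eq_integral iE) auto
  also have "expectation (\<lambda>\<omega>. exp (l * Z \<omega>)) \<le> expectation (\<lambda>\<omega>. 1 + l * Z \<omega> + (Z \<omega>)\<^sup>2 * gB l)"
  proof (rule integral_mono)
    fix x assume "x \<in> space M"
    then show "exp (l * Z x) \<le> 1 + l * Z x + (Z x)\<^sup>2 * gB l"
      unfolding gB_def by (rule exp_bernstein_bound[OF bnd l])
  qed (use iE iZ iZ2 in auto)
  also have "expectation (\<lambda>\<omega>. 1 + l * Z \<omega> + (Z \<omega>)\<^sup>2 * gB l) = 1 + expectation (\<lambda>\<omega>. (Z \<omega>)\<^sup>2) * gB l"
    using iZ iZ2 mean by (simp add: prob_space)
  also have "\<dots> \<le> exp (expectation (\<lambda>\<omega>. (Z \<omega>)\<^sup>2) * gB l)"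
    by simp
  finally show ?thesis by (simp add: ennreal_leI)
qed

lemma sum_split_ivl:
  fixes f :: "nat \<Rightarrow> real"
  assumes "m \<le> N"
  shows "(\<Sum>i=1..N. f i) = (\<Sum>i=1..m. f i) + (\<Sum>i=Suc m..N. f i)"
proof -
  have "{1..N} = {1..m} \<union> {Suc m..N}" using assms by auto
  then show ?thesis by (simp add: sum.union_disjoint)
qed

lemma (in prob_space) block_indep:
  fixes Z :: "nat \<Rightarrow> 'a \<Rightarrow> real" and N :: nat
  assumes indep: "indep_vars (\<lambda>_. borel) Z {1..N}"
    and m: "m \<le> N"
    and W0[measurable]: "W0 \<in> borel_measurable (PiM {1..m} (\<lambda>_. borel))"
    and W1[measurable]: "W1 \<in> borel_measurable (PiM {Suc m..N} (\<lambda>_. borel))"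
    and pos: "\<And>x. 0 \<le> W0 x" "\<And>x. 0 \<le> W1 x"
  shows "(\<integral>\<^sup>+\<omega>. ennreal (W0 (restrict (\<lambda>i. Z i \<omega>) {1..m}) * W1 (restrict (\<lambda>i. Z i \<omega>) {Suc m..N})) \<partial>M)
       = (\<integral>\<^sup>+\<omega>. ennreal (W0 (restrict (\<lambda>i. Z i \<omega>) {1..m})) \<partial>M) * (\<integral>\<^sup>+\<omega>. ennreal (W1 (restrict (\<lambda>i. Z i \<omega>) {Suc m..N})) \<partial>M)"
proof -
  define K where "K j = (if j = (0::nat) then {1..m} else {Suc m..N})" for j
  define W where "W j = (if j = (0::nat) then (\<lambda>x. ennreal (W0 x)) else (\<lambda>x. ennreal (W1 x)))" for j
  have ind1: "indep_vars (\<lambda>j. PiM (K j) (\<lambda>_. borel)) (\<lambda>j \<omega>. restrict (\<lambda>i. Z i \<omega>) (K j)) {0,1}"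
    by (rule indep_vars_restrict[OF indep]) (auto simp: K_def disjoint_family_on_def m)
  have ind2: "indep_vars (\<lambda>_. borel) (\<lambda>j \<omega>. W j (restrict (\<lambda>i. Z i \<omega>) (K j))) {0,1}"
    using W0 W1 by (intro indep_vars_compose2[OF ind1]) (auto simp: W_def K_def)
  have "(\<integral>\<^sup>+\<omega>. (\<Prod>j\<in>{0,1}. W j (restrict (\<lambda>i. Z i \<omega>) (K j))) \<partial>M)
      = (\<Prod>j\<in>{0,1}. \<integral>\<^sup>+\<omega>. W j (restrict (\<lambda>i. Z i \<omega>) (K j)) \<partial>M)"
    by (rule indep_vars_nn_integral[OF _ ind2]) auto
  then show ?thesis by (simp add: W_def K_def ennreal_mult pos)
qed

lemma meas_W0:
  fixes m :: nat and l t :: real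
  shows "(\<lambda>x. exp (l * ((\<Sum>i=1..m. x i) - t)) * indicator {x. t \<le> (\<Sum>i=1..m. x i) \<and> (\<forall>j\<in>{1..<m}. (\<Sum>i=1..j. x i) < t)} x)
     \<in> borel_measurable (PiM {1..m} (\<lambda>_. borel))"
proof -
  have comp: "(\<lambda>x. x i :: real) \<in> borel_measurable (PiM {1..m} (\<lambda>_. borel))" if "i \<in> {1..m}" for i
    using that by (rule measurable_component_singleton)
  have s[measurable]: "(\<lambda>x. \<Sum>i=1..j. x i :: real) \<in> borel_measurable (PiM {1..m} (\<lambda>_. borel))" if "j \<le> m" for j
    using that by (intro borel_measurable_sum comp) auto
  show ?thesis
    unfolding indicator_def by measurable
qed

lemma (in prob_space) maximal_ineq:
  fixes Z :: "nat \<Rightarrow> 'a \<Rightarrow> real" and N :: nat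
  assumes indep: "indep_vars (\<lambda>_. borel) Z {1..N}"
    and Zm[measurable]: "\<And>i. Z i \<in> borel_measurable M"
    and bnd: "\<And>i \<omega>. i \<in> {1..N} \<Longrightarrow> \<omega> \<in> space M \<Longrightarrow> \<bar>Z i \<omega>\<bar> \<le> 1"
    and mean: "\<And>i. i \<in> {1..N} \<Longrightarrow> expectation (Z i) = 0"
    and l: "0 \<le> l"
  shows "emeasure M {\<omega>\<in>space M. \<exists>m\<in>{1..N}. t \<le> (\<Sum>i=1..m. Z i \<omega>)}
     \<le> ennreal (exp (-l*t)) * (\<integral>\<^sup>+\<omega>. ennreal (exp (l * (\<Sum>i=1..N. Z i \<omega>))) \<partial>M)"
proof -
  define S where "S m \<omega> = (\<Sum>i=1..m. Z i \<omega>)" for m \<omega>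
  have S[measurable]: "\<And>m. S m \<in> borel_measurable M" unfolding S_def by measurable
  define A where "A m = {\<omega>\<in>space M. t \<le> S m \<omega> \<and> (\<forall>j\<in>{1..<m}. S j \<omega> < t)}" for m
  have Lt: "\<And>j. {\<omega>\<in>space M. S j \<omega> < t} \<in> sets M" by measurable
  have Ge: "\<And>m. {\<omega>\<in>space M. t \<le> S m \<omega>} \<in> sets M" by measurable
  have A[measurable]: "\<And>m. A m \<in> sets M" unfolding A_def
    by (intro sets.sets_Collect_conj sets.sets_Collect_finite_All Lt Ge) auto
  define F where "F \<omega> = ennreal (exp (l * (S N \<omega> - t)))" for \<omega>
  have F[measurable]: "F \<in> borel_measurable M" unfolding F_def by measurable
  have sub: "{\<omega>\<in>space M. \<exists>m\<in>{1..N}. t \<le> (\<Sum>i=1..m. Z i \<omega>)} \<subseteq> (\<Union>m\<in>{1..N}. A m)"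
  proof
    fix \<omega> assume "\<omega> \<in> {\<omega>\<in>space M. \<exists>m\<in>{1..N}. t \<le> (\<Sum>i=1..m. Z i \<omega>)}"
    then have \<omega>: "\<omega> \<in> space M" and ex: "\<exists>m. m \<in> {1..N} \<and> t \<le> S m \<omega>" by (auto simp: S_def)
    define m where "m = (LEAST m. m \<in> {1..N} \<and> t \<le> S m \<omega>)"
    have m: "m \<in> {1..N} \<and> t \<le> S m \<omega>" unfolding m_def using ex by (rule LeastI_ex)
    have "S j \<omega> < t" if "j \<in> {1..<m}" for j
    proof (rule ccontr)
      assume "\<not> S j \<omega> < t"
      then have "m \<le> j" unfolding m_def using that m by (intro Least_le) auto
      then show False using that by auto
    qed
    then show "\<omega> \<in> (\<Union>m\<in>{1..N}. A m)" using m \<omega> by (auto simp: A_def)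
  qed
  have disj: "disjoint_family_on A {1..N}"
    unfolding disjoint_family_on_def
  proof (intro ballI impI)
    fix m n assume "m \<in> {1..N}" "n \<in> {1..N}" "m \<noteq> n"
    then have "m < n \<or> n < m" by auto
    show "A m \<inter> A n = {}"
    proof (intro equalityI subsetI)
      fix \<omega> assume w: "\<omega> \<in> A m \<inter> A n"
      from \<open>m < n \<or> n < m\<close> show "\<omega> \<in> {}"
      proof
        assume "m < n" then have "m \<in> {1..<n}" using \<open>m \<in> {1..N}\<close> by auto
        then show "\<omega> \<in> {}" using w unfolding A_def by fastforce
      next
        assume "n < m" then have "n \<in> {1..<m}" using \<open>n \<in> {1..N}\<close> by auto
        then show "\<omega> \<in> {}" using w unfolding A_def by fastforce
      qed
    qed simp
  qed
  have step: "emeasure M (A m) \<le> (\<integral>\<^sup>+\<omega>. F \<omega> * indicator (A m) \<omega> \<partial>M)" if m: "m \<in> {1..N}" for m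
  proof -
    define W0 where "W0 x = exp (l * ((\<Sum>i=1..m. x i) - t)) * indicator {x. t \<le> (\<Sum>i=1..m. x i) \<and> (\<forall>j\<in>{1..<m}. (\<Sum>i=1..j. x i) < t)} x" for x :: "nat \<Rightarrow> real"
    define W1 where "W1 x = exp (l * (\<Sum>i=Suc m..N. x i))" for x :: "nat \<Rightarrow> real"
    have W0m: "W0 \<in> borel_measurable (PiM {1..m} (\<lambda>_. borel))" unfolding W0_def by (rule meas_W0)
    have W1m: "W1 \<in> borel_measurable (PiM {Suc m..N} (\<lambda>_. borel))" unfolding W1_def by measurable
    have W0e: "W0 (restrict (\<lambda>i. Z i \<omega>) {1..m}) = exp (l * (S m \<omega> - t)) * indicator (A m) \<omega>"
      if "\<omega> \<in> space M" for \<omega>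
      using that by (simp add: W0_def S_def A_def indicator_def)
    have W1e: "W1 (restrict (\<lambda>i. Z i \<omega>) {Suc m..N}) = exp (l * (S N \<omega> - S m \<omega>))" for \<omega>
      using m sum_split_ivl[of m N "\<lambda>i. Z i \<omega>"] by (simp add: W1_def S_def)
    have R1: "1 \<le> (\<integral>\<^sup>+\<omega>. ennreal (exp (l * (S N \<omega> - S m \<omega>))) \<partial>M)"
    proof -
      have iZ: "integrable M (Z i)" if "i \<in> {1..N}" for i
        by (rule integrable_const_bound[where B=1]) (use bnd that in auto)
      have iR: "integrable M (\<lambda>\<omega>. S N \<omega> - S m \<omega>)"
        unfolding S_def using m
        by (intro Bochner_Integration.integrable_diff Bochner_Integration.integrable_sum iZ) auto
      have iE: "integrable M (\<lambda>\<omega>. exp (l * (S N \<omega> - S m \<omega>)))"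
      proof (rule integrable_const_bound[where B="exp (l * (2 * real N))"])
        show "AE x in M. norm (exp (l * (S N x - S m x))) \<le> exp (l * (2 * real N))"
        proof (intro AE_I2)
          fix x assume x: "x \<in> space M"
          have a: "\<bar>S k x\<bar> \<le> real N" if "k \<le> N" for k
          proof -
            have "\<bar>S k x\<bar> \<le> (\<Sum>i=1..k. \<bar>Z i x\<bar>)" unfolding S_def by (rule sum_abs)
            also have "\<dots> \<le> (\<Sum>i=1..k. 1)" using that x by (intro sum_mono bnd) auto
            finally show ?thesis using that by simp
          qed
          have "S N x - S m x \<le> 2 * real N" using a[of N] a[of m] m by auto
          then have "l * (S N x - S m x) \<le> l * (2 * real N)" using l by (intro mult_left_mono) auto
          then show "norm (exp (l * (S N x - S m x))) \<le> exp (l * (2 * real N))" by simp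
        qed
      qed simp
      have iS: "integrable M (S k)" if "k \<le> N" for k
        unfolding S_def using that by (intro Bochner_Integration.integrable_sum iZ) auto
      have eS: "expectation (S k) = 0" if "k \<le> N" for k
      proof -
        have "expectation (S k) = (\<Sum>i=1..k. expectation (Z i))"
          unfolding S_def using that by (intro Bochner_Integration.integral_sum iZ) auto
        also have "\<dots> = 0" using that by (intro sum.neutral) (auto simp: mean)
        finally show ?thesis .
      qed
      have "expectation (\<lambda>\<omega>. S N \<omega> - S m \<omega>) = 0"
        using m iS[of N] iS[of m] eS[of N] eS[of m]
        by (subst Bochner_Integration.integral_diff) auto
      then have "1 \<le> expectation (\<lambda>\<omega>. 1 + l * (S N \<omega> - S m \<omega>))"
        using iR by (simp add: prob_space)
      also have "\<dots> \<le> expectation (\<lambda>\<omega>. exp (l * (S N \<omega> - S m \<omega>)))"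
        using iR iE by (intro integral_mono) auto
      also have "ennreal \<dots> = (\<integral>\<^sup>+\<omega>. ennreal (exp (l * (S N \<omega> - S m \<omega>))) \<partial>M)"
        by (intro nn_integral_eq_integral[symmetric] iE) auto
      finally show ?thesis by (simp add: ennreal_leI)
    qed
    have "emeasure M (A m) = (\<integral>\<^sup>+\<omega>. indicator (A m) \<omega> \<partial>M)" by simp
    also have "\<dots> \<le> (\<integral>\<^sup>+\<omega>. ennreal (exp (l * (S m \<omega> - t)) * indicator (A m) \<omega>) \<partial>M)"
    proof (intro nn_integral_mono)
      fix \<omega> assume "\<omega> \<in> space M"
      show "indicator (A m) \<omega> \<le> ennreal (exp (l * (S m \<omega> - t)) * indicator (A m) \<omega>)"
      proof (cases "\<omega> \<in> A m")
        case True
        then have "0 \<le> l * (S m \<omega> - t)" using l by (auto simp: A_def)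
        then show ?thesis using True by simp
      qed simp
    qed
    also have "\<dots> = (\<integral>\<^sup>+\<omega>. ennreal (W0 (restrict (\<lambda>i. Z i \<omega>) {1..m})) \<partial>M)"
      by (intro nn_integral_cong) (metis W0e)
    also have "\<dots> \<le> (\<integral>\<^sup>+\<omega>. ennreal (W0 (restrict (\<lambda>i. Z i \<omega>) {1..m})) \<partial>M) * (\<integral>\<^sup>+\<omega>. ennreal (W1 (restrict (\<lambda>i. Z i \<omega>) {Suc m..N})) \<partial>M)"
    proof -
      have "(\<integral>\<^sup>+\<omega>. ennreal (W1 (restrict (\<lambda>i. Z i \<omega>) {Suc m..N})) \<partial>M) = (\<integral>\<^sup>+\<omega>. ennreal (exp (l * (S N \<omega> - S m \<omega>))) \<partial>M)"
        by (simp only: W1e)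
      then have "1 \<le> (\<integral>\<^sup>+\<omega>. ennreal (W1 (restrict (\<lambda>i. Z i \<omega>) {Suc m..N})) \<partial>M)" using R1 by simp
      then show ?thesis using mult_left_mono[of 1 _ "(\<integral>\<^sup>+\<omega>. ennreal (W0 (restrict (\<lambda>i. Z i \<omega>) {1..m})) \<partial>M)"] by simp
    qed
    also have "\<dots> = (\<integral>\<^sup>+\<omega>. ennreal (W0 (restrict (\<lambda>i. Z i \<omega>) {1..m}) * W1 (restrict (\<lambda>i. Z i \<omega>) {Suc m..N})) \<partial>M)"
      using m by (intro block_indep[OF indep, symmetric] W0m W1m) (auto simp: W0_def W1_def)
    also have "\<dots> = (\<integral>\<^sup>+\<omega>. F \<omega> * indicator (A m) \<omega> \<partial>M)"
    proof (intro nn_integral_cong)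
      fix \<omega> assume \<omega>: "\<omega> \<in> space M"
      have "exp (l * (S m \<omega> - t)) * exp (l * (S N \<omega> - S m \<omega>)) = exp (l * (S N \<omega> - t))"
        by (simp only: mult_exp_exp) (simp add: algebra_simps)
      then show "ennreal (W0 (restrict (\<lambda>i. Z i \<omega>) {1..m}) * W1 (restrict (\<lambda>i. Z i \<omega>) {Suc m..N})) = F \<omega> * indicator (A m) \<omega>"
        by (simp only: W0e[OF \<omega>] W1e) (auto simp: F_def indicator_def)
    qed
    finally show ?thesis .
  qed
  have "emeasure M {\<omega>\<in>space M. \<exists>m\<in>{1..N}. t \<le> (\<Sum>i=1..m. Z i \<omega>)} \<le> emeasure M (\<Union>m\<in>{1..N}. A m)"
    using sub by (intro emeasure_mono) auto
  also have "\<dots> \<le> (\<Sum>m\<in>{1..N}. emeasure M (A m))"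
    by (intro emeasure_subadditive_finite) auto
  also have "\<dots> \<le> (\<Sum>m\<in>{1..N}. \<integral>\<^sup>+\<omega>. F \<omega> * indicator (A m) \<omega> \<partial>M)"
    by (intro sum_mono step)
  also have "\<dots> = (\<integral>\<^sup>+\<omega>. (\<Sum>m\<in>{1..N}. F \<omega> * indicator (A m) \<omega>) \<partial>M)"
    by (intro nn_integral_sum[symmetric]) auto
  also have "\<dots> = (\<integral>\<^sup>+\<omega>. F \<omega> * indicator (\<Union>m\<in>{1..N}. A m) \<omega> \<partial>M)"
  proof (intro nn_integral_cong)
    fix \<omega>
    have "(\<Sum>m\<in>{1..N}. indicator (A m) \<omega> :: ennreal) = indicator (\<Union>m\<in>{1..N}. A m) \<omega>"
      by (rule indicator_UN_disjoint[OF _ disj, symmetric]) simp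
    then show "(\<Sum>m\<in>{1..N}. F \<omega> * indicator (A m) \<omega>) = F \<omega> * indicator (\<Union>m\<in>{1..N}. A m) \<omega>"
      by (simp only: sum_distrib_left[symmetric])
  qed
  also have "\<dots> \<le> (\<integral>\<^sup>+\<omega>. F \<omega> \<partial>M)"
    by (intro nn_integral_mono) (auto simp: indicator_def)
  also have "\<dots> = (\<integral>\<^sup>+\<omega>. ennreal (exp (-l*t)) * ennreal (exp (l * (\<Sum>i=1..N. Z i \<omega>))) \<partial>M)"
    by (intro nn_integral_cong) (simp add: F_def S_def ennreal_mult[symmetric] mult_exp_exp algebra_simps)
  also have "\<dots> = ennreal (exp (-l*t)) * (\<integral>\<^sup>+\<omega>. ennreal (exp (l * (\<Sum>i=1..N. Z i \<omega>))) \<partial>M)"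
    by (intro nn_integral_cmult) measurable
  finally show ?thesis .
qed

lemma choose_l:
  fixes u V t :: real
  assumes u: "u > 0" and V: "V \<ge> 0" and t: "t = (u + sqrt (u\<^sup>2 + 18 * V * u)) / 3"
  shows "\<exists>l. 0 \<le> l \<and> l < 3 \<and> - l * t + gB l * V \<le> - u"
proof (cases "V = 0")
  case True
  then have "t = 2 * u / 3" using t u by simp
  then show ?thesis using True by (intro exI[of _ "3/2"]) (auto simp: gB_def)
next
  case False
  then have V: "V > 0" using V by simp
  define s where "s = sqrt (u\<^sup>2 + 18 * V * u)"
  have nn: "0 \<le> u\<^sup>2 + 18 * V * u" using u V by (intro add_nonneg_nonneg mult_nonneg_nonneg) auto
  then have s2: "s\<^sup>2 = u\<^sup>2 + 18 * V * u" unfolding s_def by simp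
  have s0: "s \<ge> 0" unfolding s_def using nn by simp
  have tpos: "t > 0" using t u s0 by (simp add: s_def[symmetric])
  have key: "9 * t\<^sup>2 - 6 * u * t - 18 * V * u = 0"
    using s2 unfolding t s_def[symmetric] by (simp add: power2_eq_square algebra_simps)
  define l where "l = 3 * t / (3 * V + t)"
  have d: "3 * V + t > 0" using V tpos by simp
  have l0: "0 \<le> l" unfolding l_def using tpos d by simp
  have l3: "l < 3" unfolding l_def using d V by (simp add: divide_less_eq)
  have e: "1 - l / 3 = 3 * V / (3 * V + t)" unfolding l_def using d by (simp add: field_simps)
  have "gB l * V = l\<^sup>2 * (3 * V + t) / 6"
    unfolding gB_def e using V d by (simp add: field_simps)
  then have "- l * t + gB l * V = - l * t + l\<^sup>2 * (3 * V + t) / 6" by simp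
  also have "\<dots> = - 3 * t\<^sup>2 / (2 * (3 * V + t))"
  proof -
    define D where "D = 3 * V + t"
    have D: "D > 0" using d D_def by simp
    have "- l * t + l\<^sup>2 * D / 6 = - 3 * t\<^sup>2 / (2 * D)"
      unfolding l_def D_def[symmetric] using D by (simp add: field_simps power2_eq_square)
    then show ?thesis by (simp add: D_def)
  qed
  also have "\<dots> \<le> - u"
    using d key by (simp add: field_simps power2_eq_square)
  finally show ?thesis using l0 l3 by blast
qed

lemma (in prob_space) bernstein_max:
  fixes Z :: "nat \<Rightarrow> 'a \<Rightarrow> real" and N :: nat
  assumes indep: "indep_vars (\<lambda>_. borel) Z {1..N}"
    and Zm[measurable]: "\<And>i. Z i \<in> borel_measurable M"
    and bnd: "\<And>i \<omega>. i \<in> {1..N} \<Longrightarrow> \<omega> \<in> space M \<Longrightarrow> \<bar>Z i \<omega>\<bar> \<le> 1"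
    and mean: "\<And>i. i \<in> {1..N} \<Longrightarrow> expectation (Z i) = 0"
    and u: "u > 0"
  shows "emeasure M {\<omega>\<in>space M. \<exists>m\<in>{1..N}.
            (u + sqrt (u\<^sup>2 + 18 * (\<Sum>i=1..N. expectation (\<lambda>\<omega>. (Z i \<omega>)\<^sup>2)) * u)) / 3 \<le> (\<Sum>i=1..m. Z i \<omega>)}
       \<le> ennreal (exp (- u))"
proof -
  define V where "V = (\<Sum>i=1..N. expectation (\<lambda>\<omega>. (Z i \<omega>)\<^sup>2))"
  define t where "t = (u + sqrt (u\<^sup>2 + 18 * V * u)) / 3"
  have V0: "V \<ge> 0" unfolding V_def by (intro sum_nonneg integral_nonneg_AE) auto
  obtain l where l: "0 \<le> l" "l < 3" and lb: "- l * t + gB l * V \<le> - u"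
    using choose_l[OF u V0 t_def] by blast
  have "emeasure M {\<omega>\<in>space M. \<exists>m\<in>{1..N}. t \<le> (\<Sum>i=1..m. Z i \<omega>)}
     \<le> ennreal (exp (-l*t)) * (\<integral>\<^sup>+\<omega>. ennreal (exp (l * (\<Sum>i=1..N. Z i \<omega>))) \<partial>M)"
    by (rule maximal_ineq[OF indep Zm bnd mean l(1)])
  also have "(\<integral>\<^sup>+\<omega>. ennreal (exp (l * (\<Sum>i=1..N. Z i \<omega>))) \<partial>M)
      = (\<integral>\<^sup>+\<omega>. (\<Prod>i\<in>{1..N}. ennreal (exp (l * Z i \<omega>))) \<partial>M)"
    by (intro nn_integral_cong) (simp add: sum_distrib_left exp_sum prod_ennreal)
  also have "\<dots> = (\<Prod>i\<in>{1..N}. \<integral>\<^sup>+\<omega>. ennreal (exp (l * Z i \<omega>)) \<partial>M)"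
    by (intro indep_vars_nn_integral indep_vars_compose2[OF indep]) auto
  also have "\<dots> \<le> (\<Prod>i\<in>{1..N}. ennreal (exp (expectation (\<lambda>\<omega>. (Z i \<omega>)\<^sup>2) * gB l)))"
    by (intro prod_mono_ennreal mgf_bound Zm bnd mean l) auto
  also have "\<dots> = ennreal (exp (gB l * V))"
    by (simp add: prod_ennreal exp_sum[symmetric] V_def sum_distrib_left mult.commute)
  also have "ennreal (exp (-l*t)) * ennreal (exp (gB l * V)) = ennreal (exp (- l * t + gB l * V))"
    by (simp add: ennreal_mult[symmetric] mult_exp_exp)
  also have "\<dots> \<le> ennreal (exp (- u))"
    using lb by (intro ennreal_leI) simp
  finally show ?thesis
    by (simp add: t_def V_def mult_left_mono)
qed

lemma t_mono:
  fixes u u' V V' :: real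
  assumes "0 \<le> u" "u \<le> u'" "0 \<le> V" "V \<le> V'"
  shows "(u + sqrt (u\<^sup>2 + 18 * V * u)) / 3 \<le> (u' + sqrt (u'\<^sup>2 + 18 * V' * u')) / 3"
proof -
  have "u\<^sup>2 \<le> u'\<^sup>2" using assms by (intro power_mono) auto
  moreover have "V * u \<le> V' * u'" using assms by (intro mult_mono) auto
  ultimately have "u\<^sup>2 + 18 * V * u \<le> u'\<^sup>2 + 18 * V' * u'" by linarith
  then have "sqrt (u\<^sup>2 + 18 * V * u) \<le> sqrt (u'\<^sup>2 + 18 * V' * u')" by (rule real_sqrt_le_mono)
  then show ?thesis using assms by (intro divide_right_mono add_mono) auto
qed

lemma inv_sq_sum:
  "(\<Sum>k. ennreal (c * (1 / (real k + 1)\<^sup>2))) \<le> ennreal (2 * c)" if c: "c \<ge> 0" for c :: real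
proof -
  define f where "f n = 2 * inverse (real (Suc n))" for n
  have "f \<longlonglongrightarrow> 0" unfolding f_def
    using tendsto_mult[OF tendsto_const[of 2] LIMSEQ_inverse_real_of_nat] by simp
  then have s: "(\<lambda>n. f n - f (Suc n)) sums (f 0 - 0)" by (rule telescope_sums')
  have s2: "(\<lambda>n. c * (f n - f (Suc n))) sums (c * 2)"
    using sums_mult[OF s, of c] by (simp add: f_def)
  have le: "c * (1 / (real k + 1)\<^sup>2) \<le> c * (f k - f (Suc k))" for k
  proof -
    have "f k - f (Suc k) = 2 / ((real k + 1) * (real k + 2))"
      by (simp add: f_def field_simps)
    moreover have "1 / (real k + 1)\<^sup>2 \<le> 2 / ((real k + 1) * (real k + 2))"
    proof -
      have "(real k + 1) * (real k + 2) \<le> 2 * (real k + 1)\<^sup>2" by (simp add: power2_eq_square algebra_simps)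
      then have "2 / (2 * (real k + 1)\<^sup>2) \<le> 2 / ((real k + 1) * (real k + 2))"
        by (intro divide_left_mono) auto
      then show ?thesis by simp
    qed
    ultimately show ?thesis using c by (intro mult_left_mono) auto
  qed
  have nn: "0 \<le> c * (f n - f (Suc n))" for n
    using le[of n] c by (meson order_trans mult_nonneg_nonneg zero_le_divide_1_iff zero_le_power2)
  have "(\<Sum>k. ennreal (c * (1 / (real k + 1)\<^sup>2))) \<le> (\<Sum>k. ennreal (c * (f k - f (Suc k))))"
    by (intro suminf_le ennreal_leI le) auto
  also have "\<dots> = ennreal (c * 2)"
    by (rule suminf_ennreal_eq[OF nn s2])
  finally show ?thesis by (simp add: mult.commute)
qed

theorem lemma5:
  fixes M :: "'a measure" and X :: "nat \<Rightarrow> 'a \<Rightarrow> real" and \<delta> :: real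
  assumes "prob_space M"
    and "0 < \<delta>" and "\<delta> < 1"
    and "prob_space.indep_vars M (\<lambda>_. borel) X {1..}"
    and "\<And>i. i \<ge> 1 \<Longrightarrow> (AE \<omega> in M. 0 \<le> X i \<omega> \<and> X i \<omega> \<le> 1)"
  shows "measure M {\<omega> \<in> space M. \<exists>n\<ge>1. S_sum M X n \<omega> / real n \<ge> eps_seq M X \<delta> n} \<le> \<delta> / 2"
proof -
  interpret prob_space M by (rule assms(1))
  note indep = assms(4)
  have dpos: "0 < \<delta>" by (rule assms(2))
  have Xm: "X i \<in> borel_measurable M" if "i \<ge> 1" for i
    using indep that unfolding indep_vars_def by auto
  define clip where "clip x = max 0 (min 1 x)" for x :: real
  have clip_m[measurable]: "clip \<in> borel_measurable borel" unfolding clip_def by measurable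
  define \<mu> where "\<mu> i = expectation (X i)" for i
  define Z where "Z i \<omega> = (if i = 0 then 0 else clip (X i \<omega>) - \<mu> i)" for i \<omega>
  have Zm[measurable]: "Z i \<in> borel_measurable M" for i
  proof (cases "i = 0")
    case False
    then have [measurable]: "X i \<in> borel_measurable M" using Xm by auto
    show ?thesis using False unfolding Z_def by simp
  qed (simp add: Z_def[abs_def])
  have Xcm: "(\<lambda>\<omega>. clip (X i \<omega>)) \<in> borel_measurable M" if "i \<ge> 1" for i
    using measurable_compose[OF Xm[OF that] clip_m] by (simp add: comp_def)
  have AEX: "AE \<omega> in M. X i \<omega> = clip (X i \<omega>)" if "i \<ge> 1" for i
    using assms(5)[OF that] by eventually_elim (auto simp: clip_def)
  have AEZ: "AE \<omega> in M. Z i \<omega> = X i \<omega> - \<mu> i" if "i \<ge> 1" for i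
    using AEX[OF that] by eventually_elim (use that in \<open>auto simp: Z_def\<close>)
  have clip01: "0 \<le> clip x" "clip x \<le> 1" for x unfolding clip_def by auto
  have iX: "integrable M (X i)" if "i \<ge> 1" for i
  proof -
    have "integrable M (\<lambda>\<omega>. clip (X i \<omega>))"
      using Xm[OF that] by (intro integrable_const_bound[where B=1]) (auto simp: clip01 abs_le_iff clip_def)
    moreover have "AE \<omega> in M. clip (X i \<omega>) = X i \<omega>" using AEX[OF that] by eventually_elim simp
    ultimately show ?thesis by (rule integrable_cong_AE_imp[OF _ Xm[OF that]])
  qed
  have mu: "\<mu> i = expectation (\<lambda>\<omega>. clip (X i \<omega>))" if "i \<ge> 1" for i
    unfolding \<mu>_def using AEX[OF that] Xm[OF that] Xcm[OF that] by (intro integral_cong_AE) auto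
  have mu01: "0 \<le> \<mu> i \<and> \<mu> i \<le> 1" if "i \<ge> 1" for i
  proof -
    have ic: "integrable M (\<lambda>\<omega>. clip (X i \<omega>))"
      using Xm[OF that] by (intro integrable_const_bound[where B=1]) (auto simp: clip01 abs_le_iff clip_def)
    have "0 \<le> expectation (\<lambda>\<omega>. clip (X i \<omega>))" by (rule Bochner_Integration.integral_nonneg) (simp add: clip01)
    moreover have "expectation (\<lambda>\<omega>. clip (X i \<omega>)) \<le> expectation (\<lambda>\<omega>. 1)"
      using ic by (intro integral_mono) (auto simp: clip01)
    ultimately show ?thesis using mu[OF that] by (simp add: prob_space)
  qed
  have bnd: "\<bar>Z i \<omega>\<bar> \<le> 1" if "i \<in> {1..N}" for i N \<omega>
    using that mu01[of i] clip01[of "X i \<omega>"] by (auto simp: Z_def abs_le_iff)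
  have meanZ: "expectation (Z i) = 0" if "i \<in> {1..N}" for i N
  proof -
    have i1: "i \<ge> 1" using that by auto
    have "expectation (Z i) = expectation (\<lambda>\<omega>. X i \<omega> - \<mu> i)"
      using AEZ[OF i1] Xm[OF i1] by (intro integral_cong_AE) auto
    also have "\<dots> = 0" using iX[of i] that by (simp add: prob_space \<mu>_def)
    finally show ?thesis .
  qed
  have varZ: "prob_space.variance M (X i) = expectation (\<lambda>\<omega>. (Z i \<omega>)\<^sup>2)" if "i \<ge> 1" for i
    unfolding \<mu>_def[symmetric] using AEZ[OF that] Xm[OF that]
    by (intro integral_cong_AE) auto
  have indepZ: "indep_vars (\<lambda>_. borel) Z {1..N}" for N
  proof -
    have "indep_vars (\<lambda>_. borel) X {1..N}"
      by (rule indep_vars_subset[OF indep]) auto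
    then have "indep_vars (\<lambda>_. borel) (\<lambda>i \<omega>. (\<lambda>x. clip x - \<mu> i) (X i \<omega>)) {1..N}"
      by (rule indep_vars_compose2) simp
    then show ?thesis
      by (rule indep_vars_cong[THEN iffD1, rotated 3]) (auto simp: Z_def)
  qed

  define E where "E = {\<omega> \<in> space M. \<exists>n\<ge>1. S_sum M X n \<omega> / real n \<ge> eps_seq M X \<delta> n}"
  define N where "N k = (2::nat) ^ (k + 1)" for k
  define uk where "uk k = 2 * ln (real k + 1) + ln (4 / \<delta>)" for k
  define Vk where "Vk k = (\<Sum>i=1..N k. expectation (\<lambda>\<omega>. (Z i \<omega>)\<^sup>2))" for k
  define tk where "tk k = (uk k + sqrt ((uk k)\<^sup>2 + 18 * Vk k * uk k)) / 3" for k
  define B where "B k = {\<omega>\<in>space M. \<exists>m\<in>{1..N k}. tk k \<le> (\<Sum>i=1..m. Z i \<omega>)}" for k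
  have ln4: "ln (4 / \<delta>) > 0" using assms(2,3) by simp
  have uk_pos: "uk k > 0" for k
  proof -
    have "0 \<le> ln (real k + 1)" by simp
    then show ?thesis unfolding uk_def using ln4 by linarith
  qed
  have B_meas[measurable]: "B k \<in> sets M" for k unfolding B_def by measurable
  have exp_uk: "exp (- uk k) = \<delta> / 4 * (1 / (real k + 1)\<^sup>2)" for k
  proof -
    have a: "real k + 1 > 0" by simp
    have p: "(real k + 1)\<^sup>2 > 0" "4 / \<delta> > 0" using a dpos by auto
    have "ln ((real k + 1)\<^sup>2 * (4 / \<delta>)) = ln ((real k + 1)\<^sup>2) + ln (4 / \<delta>)"
      by (rule ln_mult_pos[OF p])
    also have "ln ((real k + 1)\<^sup>2) = 2 * ln (real k + 1)" using a by (simp add: ln_realpow)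
    finally have "uk k = ln ((real k + 1)\<^sup>2 * (4 / \<delta>))" unfolding uk_def by simp
    then have "exp (- uk k) = 1 / ((real k + 1)\<^sup>2 * (4 / \<delta>))"
      using a dpos by (simp add: exp_minus inverse_eq_divide)
    then show ?thesis using dpos by (simp add: field_simps)
  qed
  have B_bound: "emeasure M (B k) \<le> ennreal (\<delta> / 4 * (1 / (real k + 1)\<^sup>2))" for k
  proof -
    have "emeasure M (B k) \<le> ennreal (exp (- uk k))"
      unfolding B_def tk_def Vk_def
      by (rule bernstein_max[OF indepZ Zm bnd meanZ uk_pos])
    then show ?thesis by (simp add: exp_uk)
  qed
  have var_nn: "0 \<le> prob_space.variance M (X i)" for i
    by (rule Bochner_Integration.integral_nonneg) simp
  have Vk_eq: "Vk k = v_sum M X (N k)" for k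
    unfolding Vk_def v_sum_def by (intro sum.cong refl) (simp add: varZ)
  have AEall: "AE \<omega> in M. \<forall>i. i \<ge> 1 \<longrightarrow> X i \<omega> = clip (X i \<omega>)"
    unfolding AE_all_countable by (intro allI AE_impI AEX)
  have sub: "AE \<omega> in M. \<omega> \<in> E \<longrightarrow> \<omega> \<in> (\<Union>k. B k)"
    using AEall
  proof eventually_elim
    case (elim \<omega>)
    show ?case
    proof
      assume "\<omega> \<in> E"
      then obtain n where \<omega>: "\<omega> \<in> space M" and n1: "n \<ge> 1"
        and ineq: "S_sum M X n \<omega> / real n \<ge> eps_seq M X \<delta> n" unfolding E_def by auto
      obtain k where k: "2^k \<le> n" "n < 2^(k+1)" using ex_power_ivl1[of 2 n] n1 by auto
      have Seq: "S_sum M X n \<omega> = (\<Sum>i=1..n. Z i \<omega>)"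
        unfolding S_sum_def using elim by (intro sum.cong refl) (auto simp: Z_def \<mu>_def)
      define u where "u = u_seq \<delta> n"
      define v where "v = v_sum M X (2 * n)"
      have eps: "eps_seq M X \<delta> n = (u + sqrt (u\<^sup>2 + 18 * v * u)) / (3 * real n)"
        unfolding eps_seq_def u_def v_def by (simp add: Let_def)
      have npos: "real n > 0" using n1 by simp
      have ge: "(u + sqrt (u\<^sup>2 + 18 * v * u)) / 3 \<le> (\<Sum>i=1..n. Z i \<omega>)"
      proof -
        have "eps_seq M X \<delta> n = ((u + sqrt (u\<^sup>2 + 18 * v * u)) / 3) / real n"
          unfolding eps by simp
        then have "((u + sqrt (u\<^sup>2 + 18 * v * u)) / 3) / real n \<le> (\<Sum>i=1..n. Z i \<omega>) / real n"
          using ineq unfolding Seq by simp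
        then show ?thesis using npos by (simp only: divide_le_cancel)
      qed
      have klog: "real k \<le> log 2 (real n)"
      proof -
        have "2 powr real k = real (2^k)" by (simp add: powr_realpow)
        also have "\<dots> \<le> real n" using k(1) by linarith
        finally show ?thesis using npos by (subst le_log_iff) auto
      qed
      have "uk k \<le> u"
      proof -
        have "ln (real k + 1) \<le> ln (log 2 (real n) + 1)"
          using klog by (subst ln_le_cancel_iff) auto
        then show ?thesis unfolding uk_def u_def u_seq_def by simp
      qed
      moreover have "0 \<le> Vk k" unfolding Vk_eq v_sum_def by (intro sum_nonneg var_nn)
      moreover have "Vk k \<le> v"
        unfolding Vk_eq v_def v_sum_def
      proof (rule sum_mono2)
        show "{1..N k} \<subseteq> {1..2 * n}" using k(1) by (auto simp: N_def)
      qed (auto simp: var_nn)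
      ultimately have "tk k \<le> (u + sqrt (u\<^sup>2 + 18 * v * u)) / 3"
        unfolding tk_def using uk_pos[of k] by (intro t_mono) auto
      with ge have "tk k \<le> (\<Sum>i=1..n. Z i \<omega>)" by linarith
      moreover have "n \<in> {1..N k}" using n1 k(2) by (auto simp: N_def)
      ultimately show "\<omega> \<in> (\<Union>k. B k)" using \<omega> unfolding B_def by blast
    qed
  qed
  have "emeasure M E \<le> emeasure M (\<Union>k. B k)"
    by (rule emeasure_mono_AE[OF sub]) auto
  also have "\<dots> \<le> (\<Sum>k. emeasure M (B k))"
    by (rule emeasure_subadditive_countably) auto
  also have "\<dots> \<le> (\<Sum>k. ennreal (\<delta> / 4 * (1 / (real k + 1)\<^sup>2)))"
    by (intro suminf_le B_bound) auto
  also have "\<dots> \<le> ennreal (2 * (\<delta> / 4))"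
    by (rule inv_sq_sum) (use dpos in simp)
  finally have "ennreal (measure M E) \<le> ennreal (\<delta> / 2)"
    by (simp add: emeasure_eq_measure)
  then show ?thesis unfolding E_def[symmetric] using dpos by (simp add: ennreal_le_iff)
qed

end
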